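(* Let $X$ be a Polish space and let $\rho:\mathcal{F}\to[\Psi]^\omega$ be a partition regular function. If $\mathcal{F}$ is an analytic subset of $[\Omega]^\omega$ and $\rho$ is a Borel function, then $\mathscr{L}_X(\rho)\subseteq\Sigma^1_1(X)$, i.e., every set in $\mathscr{L}_X(\rho)$ is an analytic subset of $X$.
   Context: Let $\Omega,\Psi$ be countably infinite sets and $\mathcal{F}\subseteq[\Omega]^\omega$ a nonempty family of infinite subsets of $\Omega$ with $A\setminus K\in\mathcal{F}$ for all $A\in\mathcal{F}$ and finite $K\subseteq\Omega$. A function $\rho:\mathcal{F}\to[\Psi]^\omega$ is partition regular if: (M) $E\subseteq F$ in $\mathcal{F}$ implies $\rho(E)\subseteq\rho(F)$; (R) for every $F\in\mathcal{F}$ and $A,B\subseteq\Psi$ with $\rho(F)=A\cup B$ there is $E\in\mathcal{F}$ with $\rho(E)\subseteq A$ or $\rho(E)\subseteq B$; (S) for every $F\in\mathcal{F}$ there is $E\subseteq F$, $E\in\mathcal{F}$, such that for every $a\in\rho(E)$ there is a finite $K\subseteq\Omega$ with $a\notin\rho(E\setminus K)$. Subsets of $\Omega$ are identified with their characteristic functions, so $2^\Omega=\{0,1\}^\Omega$ carries the product topology (discrete on $\{0,1\}$), and $[\Omega]^\omega$ (infinite subsets) is a $G_\delta$ subspace, hence Polish; likewise for $[\Psi]^\omega\subseteq2^\Psi$. For $x:\Psi\to X$, $\Lambda_x(\rho)$ is the set of $\eta\in X$ for which there is $F\in\mathcal{F}$ such that for every neighborhood $U$ of $\eta$ there is a finite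 $K\subseteq\Omega$ with $x_s\in U$ for all $s\in\rho(F\setminus K)$. $\mathscr{L}_X(\rho)=\{A\subseteq X:\exists x\in X^\Psi\ A=\Lambda_x(\rho)\}\cup\{\emptyset\}$, and $\Sigma^1_1(X)$ is the family of analytic subsets of $X$. *)

theory Defs
  imports "HOL-Analysis.Analysis"
begin

text \<open>The Cantor-cube topology on the powerset of a type: subsets are identified with
  their characteristic functions, and the product topology of the discrete space {0,1}
  is generated by the subbasic clopen sets {A. a in A} and {A. a notin A}.\<close>
definition cantor_top :: "'a set topology" where
  "cantor_top = topology_generated_by
     ({{A. a \<in> A} | a. True} \<union> {{A. a \<notin> A} | a. True})"

definition infsets_top :: "'a set topology" where
  "infsets_top = subtopology cantor_top {A. infinite A}"

definition borel_on :: "'a topology \<Rightarrow> 'a measure" where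
  "borel_on T = sigma (topspace T) {U. openin T U}"

definition analytic_in :: "'a topology \<Rightarrow> 'a set \<Rightarrow> bool" where
  "analytic_in T A \<longleftrightarrow> A \<subseteq> topspace T \<and>
     (A = {} \<or> (\<exists>f :: (nat \<Rightarrow> nat) \<Rightarrow> 'a. continuous_map euclidean T f \<and> range f = A))"

definition partition_regular :: "'o set set \<Rightarrow> ('o set \<Rightarrow> 'p set) \<Rightarrow> bool" where
  "partition_regular \<F> \<rho> \<longleftrightarrow>
     (\<forall>E\<in>\<F>. \<forall>F\<in>\<F>. E \<subseteq> F \<longrightarrow> \<rho> E \<subseteq> \<rho> F) \<and>
     (\<forall>F\<in>\<F>. \<forall>A B. \<rho> F = A \<union> B \<longrightarrow> (\<exists>E\<in>\<F>. \<rho> E \<subseteq> A \<or> \<rho> E \<subseteq> B)) \<and>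
     (\<forall>F\<in>\<F>. \<exists>E\<in>\<F>. E \<subseteq> F \<and>
        (\<forall>a\<in>\<rho> E. \<exists>K. finite K \<and> a \<notin> \<rho> (E - K)))"

definition Lambda_lim :: "'o set set \<Rightarrow> ('o set \<Rightarrow> 'p set) \<Rightarrow> ('p \<Rightarrow> 'x::topological_space) \<Rightarrow> 'x set" where
  "Lambda_lim \<F> \<rho> x = {\<eta>. \<exists>F\<in>\<F>. \<forall>U. open U \<and> \<eta> \<in> U \<longrightarrow>
       (\<exists>K. finite K \<and> (\<forall>s\<in>\<rho> (F - K). x s \<in> U))}"

definition L_fam :: "'o set set \<Rightarrow> ('o set \<Rightarrow> 'p set) \<Rightarrow> 'x::topological_space set set" where
  "L_fam \<F> \<rho> = {A. \<exists>x :: 'p \<Rightarrow> 'x. A = Lambda_lim \<F> \<rho> x} \<union> {{}}"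

end

theory Submission
  imports Defs
begin


instantiation nat :: metric_space
begin
definition dist_nat :: "nat \<Rightarrow> nat \<Rightarrow> real" where
  "dist_nat m n = (if m = n then 0 else 1)"
definition uniformity_nat :: "(nat \<times> nat) filter" where
  "uniformity_nat = (INF e\<in>{0 <..}. principal {(x, y). dist x y < e})"
instance
proof
  fix U :: "nat set"
  show "open U \<longleftrightarrow> (\<forall>x\<in>U. eventually (\<lambda>(x', y). x' = x \<longrightarrow> y \<in> U) uniformity)"
  proof
    assume "open U"
    show "\<forall>x\<in>U. eventually (\<lambda>(x', y). x' = x \<longrightarrow> y \<in> U) uniformity"
    proof
      fix x assume "x \<in> U"
      have "eventually (\<lambda>(x', y). x' = x \<longrightarrow> y \<in> U) (principal {(x, y). dist x y < (1::real)})"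
        using \<open>x \<in> U\<close> by (auto simp: eventually_principal dist_nat_def split: if_splits)
      then show "eventually (\<lambda>(x', y). x' = x \<longrightarrow> y \<in> U) uniformity"
        unfolding uniformity_nat_def by (intro eventually_INF1[of 1]) auto
    qed
  qed (simp add: open_discrete)
qed (auto simp: dist_nat_def uniformity_nat_def)
end

lemma dist_nat_lt1: "dist (m::nat) n < 1 \<Longrightarrow> m = n"
  by (simp add: dist_nat_def split: if_splits) 

instance nat :: complete_space
proof
  fix X :: "nat \<Rightarrow> nat" assume "Cauchy X"
  then obtain N where N: "\<forall>m\<ge>N. \<forall>n\<ge>N. dist (X m) (X n) < 1"
    using metric_CauchyD[OF \<open>Cauchy X\<close>, of 1] by auto
  then have "\<forall>\<^sub>F n in sequentially. X n = X N"
    unfolding eventually_sequentially using dist_nat_lt1 by blast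
  then have "X \<longlonglongrightarrow> X N" by (rule tendsto_eventually)
  then show "convergent X" by (auto simp: convergent_def)
qed
instance nat :: polish_space ..
instance prod :: (polish_space, polish_space) polish_space ..

fun pseq :: "(nat \<Rightarrow> 'a::metric_space) \<Rightarrow> (nat \<Rightarrow> nat) \<Rightarrow> nat \<Rightarrow> 'a" where
  "pseq d z 0 = d (z 0)"
| "pseq d z (Suc n) = (if dist (d (z (Suc n))) (pseq d z n) < (1/2)^n then d (z (Suc n)) else pseq d z n)"

lemma pseq_step: "dist (pseq d z n) (pseq d z (Suc n)) < (1/2)^n"
  by (simp add: dist_commute)

lemma pseq_in: "range d \<subseteq> C \<Longrightarrow> pseq d z n \<in> C"
  by (induction n) auto

lemma pseq_bound_aux: "dist (pseq d z m) (pseq d z (m+k)) \<le> 2*(1/2)^m - 2*(1/2)^(m+k)"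
proof (induction k)
  case 0 then show ?case by simp
next
  case (Suc k)
  have "dist (pseq d z m) (pseq d z (Suc (m+k))) \<le> dist (pseq d z m) (pseq d z (m+k)) + dist (pseq d z (m+k)) (pseq d z (Suc (m+k)))"
    by (rule dist_triangle)
  also have "\<dots> \<le> 2*(1/2)^m - 2*(1/2)^(m+k) + (1/2)^(m+k)"
    using Suc pseq_step[of d z "m+k"] by linarith
  also have "\<dots> = 2*(1/2)^m - 2*(1/2)^(m+Suc k)" by simp
  finally show ?case by simp
qed

lemma pseq_bound: "m \<le> n \<Longrightarrow> dist (pseq d z m) (pseq d z n) \<le> 2*(1/2)^m"
proof -
  assume "m \<le> n"
  have "0 \<le> (1/2::real)^n" by simp
  moreover have "dist (pseq d z m) (pseq d z n) \<le> 2*(1/2)^m - 2*(1/2)^n"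
    using pseq_bound_aux[of d z m "n-m"] \<open>m \<le> n\<close> by simp
  ultimately show ?thesis by linarith
qed

lemma pseq_Cauchy: "Cauchy (pseq d z)"
proof (rule metric_CauchyI)
  fix e :: real assume "0 < e"
  then obtain M where M: "(1/2::real)^M < e/2" using real_arch_pow_inv[of "e/2" "1/2::real"] by auto
  have "dist (pseq d z m) (pseq d z n) < e" if "M \<le> m" "M \<le> n" for m n
  proof -
    have mono: "(1/2::real)^k \<le> (1/2)^M" if "M \<le> k" for k
      using that by (simp add: power_decreasing)
    show ?thesis
    proof (cases "m \<le> n")
      case True then show ?thesis using pseq_bound[OF True, of d z] mono[OF \<open>M \<le> m\<close>] M by linarith
    next
      case False then have "n \<le> m" by simp
      have h: "dist (pseq d z m) (pseq d z n) \<le> 2*(1/2)^n"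
        using pseq_bound[OF \<open>n \<le> m\<close>, of d z] by (simp add: dist_commute)
      show ?thesis using h mono[OF \<open>M \<le> n\<close>] M by linarith
    qed
  qed
  then show "\<exists>M. \<forall>m\<ge>M. \<forall>n\<ge>M. dist (pseq d z m) (pseq d z n) < e" by blast
qed

definition phi :: "(nat \<Rightarrow> 'a::polish_space) \<Rightarrow> (nat \<Rightarrow> nat) \<Rightarrow> 'a" where
  "phi d z = lim (pseq d z)"

lemma pseq_lim: "pseq d z \<longlonglongrightarrow> phi d z"
  unfolding phi_def using pseq_Cauchy[of d z] Cauchy_convergent_iff convergent_LIMSEQ_iff by blast

lemma phi_dist: "dist (pseq d z m) (phi d z) \<le> 2*(1/2)^m"
proof (rule tendsto_upperbound)
  show "((\<lambda>n. dist (pseq d z m) (pseq d z n)) \<longlongrightarrow> dist (pseq d z m) (phi d z)) sequentially"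
    by (intro tendsto_intros pseq_lim)
  show "\<forall>\<^sub>F n in sequentially. dist (pseq d z m) (pseq d z n) \<le> 2*(1/2)^m"
    using pseq_bound eventually_sequentially by blast
qed simp

lemma pseq_local: "(\<forall>i\<le>n. z i = w i) \<Longrightarrow> pseq d z n = pseq d w n"
  by (induction n) auto

lemma phi_in: assumes "closed C" "range d \<subseteq> C" shows "phi d z \<in> C"
  by (rule closed_sequentially[OF assms(1) _ pseq_lim]) (rule pseq_in[OF assms(2)])

lemma phi_cont: "continuous_on UNIV (phi d)"
  unfolding continuous_on_topological
proof (intro ballI allI impI)
  fix z B assume "open B" "phi d z \<in> B"
  then obtain e where e: "e > 0" "\<forall>y. dist y (phi d z) < e \<longrightarrow> y \<in> B"
    using open_dist by metis
  obtain n where n: "(1/2::real)^n < e/4" using real_arch_pow_inv[of "e/4" "1/2::real"] e by auto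
  define A where "A = (\<Inter>i\<in>{..n}. (\<lambda>w. w i) -` {z i})"
  have "open A" unfolding A_def
    by (intro open_INT finite_atMost ballI open_vimage continuous_on_product_coordinates)
       (simp add: open_discrete)
  moreover have "z \<in> A" by (simp add: A_def)
  moreover have "phi d w \<in> B" if "w \<in> A" for w
  proof -
    have "pseq d w n = pseq d z n" using that pseq_local[of n w z] by (auto simp: A_def)
    then have "dist (phi d w) (phi d z) \<le> dist (pseq d w n) (phi d w) + dist (pseq d z n) (phi d z)"
      by (metis dist_commute dist_triangle)
    also have "\<dots> \<le> 4 * (1/2)^n" using phi_dist[of d w n] phi_dist[of d z n] by simp
    also have "\<dots> < e" using n by simp
    finally show ?thesis using e by blast
  qed
  ultimately show "\<exists>A. open A \<and> z \<in> A \<and> (\<forall>y\<in>UNIV. y \<in> A \<longrightarrow> phi d y \<in> B)" by blast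
qed

lemma phi_surj:
  assumes dense: "\<forall>y\<in>C. \<forall>e>0. \<exists>k. dist (d k) y < e" and "y \<in> C"
  shows "\<exists>z. phi d z = y"
proof -
  have "\<forall>n. \<exists>k. dist (d k) y < (1/2)^(n+2)"
  proof
    fix n
    have "(0::real) < (1/2)^(n+2)" by simp
    then show "\<exists>k. dist (d k) y < (1/2)^(n+2)" using dense \<open>y \<in> C\<close> by blast
  qed
  then obtain k where k: "\<And>n. dist (d (k n)) y < (1/2)^(n+2)" by metis
  have eq: "pseq d k n = d (k n)" for n
  proof (induction n)
    case (Suc n)
    have "dist (d (k (Suc n))) (d (k n)) \<le> dist (d (k (Suc n))) y + dist (d (k n)) y"
      by (simp add: dist_triangle2)
    also have "\<dots> < (1/2)^(n+3) + (1/2)^(n+2)"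
    proof (rule add_strict_mono)
      have "Suc n + 2 = n + 3" by simp
      then show "dist (d (k (Suc n))) y < (1/2)^(n+3)" using k[of "Suc n"] by (simp only:)
    qed (rule k)
    also have "\<dots> \<le> (1/2)^n"
    proof -
      have "(1/2::real)^(n+3) = (1/2)^n/8" "(1/2::real)^(n+2) = (1/2)^n/4" by (simp_all add: power_add power_divide)
      moreover have "(0::real) \<le> (1/2)^n" by simp
      ultimately show ?thesis by linarith
    qed
    finally show ?case using Suc by simp
  qed simp
  have "(\<lambda>n. dist (d (k n)) y) \<longlonglongrightarrow> 0"
  proof (rule tendsto_sandwich[of "\<lambda>n. 0" _ _ "\<lambda>n. (1/2)^(n+2)"])
    show "((\<lambda>n. (1/2::real)^(n+2)) \<longlongrightarrow> 0) sequentially"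
      by (intro LIMSEQ_power_zero[THEN LIMSEQ_ignore_initial_segment]) simp
    show "\<forall>\<^sub>F n in sequentially. (0::real) \<le> dist (d (k n)) y" by simp
    show "\<forall>\<^sub>F n in sequentially. dist (d (k n)) y \<le> (1/2)^(n+2)"
      using k by (intro always_eventually allI less_imp_le)
  qed simp
  then have "(\<lambda>n. d (k n)) \<longlonglongrightarrow> y" by (rule tendsto_dist_iff[THEN iffD2])
  moreover have "pseq d k = (\<lambda>n. d (k n))" using eq by auto
  ultimately have "pseq d k \<longlonglongrightarrow> y" by simp
  then have "phi d k = y" by (rule LIMSEQ_unique[OF pseq_lim])
  then show ?thesis by blast
qed


definition ana :: "'a::topological_space set \<Rightarrow> bool" where
  "ana A \<longleftrightarrow> A = {} \<or> (\<exists>f::(nat\<Rightarrow>nat)\<Rightarrow>'a. continuous_on UNIV f \<and> range f = A)"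

lemma dense_seq:
  fixes C :: "'a::polish_space set"
  assumes "C \<noteq> {}"
  shows "\<exists>d::nat\<Rightarrow>'a. range d \<subseteq> C \<and> (\<forall>y\<in>C. \<forall>e>0. \<exists>k. dist (d k) y < e)"
proof -
  obtain D :: "'a set" where D: "countable D" "\<And>X. open X \<Longrightarrow> X \<noteq> {} \<Longrightarrow> \<exists>d\<in>D. d\<in>X"
    using countable_dense_exists by blast
  obtain c where c: "c \<in> C" using assms by blast
  define g where "g = (\<lambda>(q::'a, m::nat). if \<exists>p\<in>C. dist p q < 1/Suc m then SOME p. p\<in>C \<and> dist p q < 1/Suc m else c)"
  have gC: "g (q, m) \<in> C \<and> ((\<exists>p\<in>C. dist p q < 1/Suc m) \<longrightarrow> dist (g (q, m)) q < 1/Suc m)" for q m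
  proof (cases "\<exists>p\<in>C. dist p q < 1/Suc m")
    case True
    then have "\<exists>p. p\<in>C \<and> dist p q < 1/Suc m" by blast
    from someI_ex[OF this] show ?thesis using True by (simp add: g_def)
  qed (simp add: g_def c)
  define E where "E = g ` (D \<times> UNIV)"
  have "countable E" unfolding E_def using D(1) by simp
  moreover have "D \<noteq> {}" using D(2)[of UNIV] by auto
  then have "E \<noteq> {}" by (simp add: E_def)
  ultimately have rE: "range (from_nat_into E) = E" by (simp add: range_from_nat_into)
  have "E \<subseteq> C" using gC by (auto simp: E_def)
  moreover have "\<exists>k. dist (from_nat_into E k) y < e" if "y \<in> C" "e > 0" for y e
  proof -
    obtain m where m: "inverse (real (Suc m)) < e/2" using reals_Archimedean[of "e/2"] \<open>e > 0\<close> by auto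
    have "open (ball y (1/Suc m))" "ball y (1/Suc m) \<noteq> {}" by auto
    then obtain q where q: "q \<in> D" "dist y q < 1/Suc m" using D(2) by (auto simp: ball_def)
    then have "\<exists>p\<in>C. dist p q < 1/Suc m" using \<open>y \<in> C\<close> by blast
    then have h: "dist (g (q, m)) q < 1/Suc m" using gC by blast
    have "dist (g (q, m)) y \<le> dist (g (q, m)) q + dist y q" by (rule dist_triangle2)
    also have "\<dots> < e" using h q(2) m by (simp add: inverse_eq_divide)
    finally have "dist (g (q, m)) y < e" .
    moreover have "g (q, m) \<in> range (from_nat_into E)" using rE q(1) by (auto simp: E_def)
    ultimately show ?thesis by auto
  qed
  ultimately show ?thesis using rE by (intro exI[of _ "from_nat_into E"]) auto
qed

lemma ana_closed:
  fixes C :: "'a::polish_space set"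
  assumes "closed C" shows "ana C"
proof (cases "C = {}")
  case False
  then obtain d :: "nat \<Rightarrow> 'a" where d: "range d \<subseteq> C" "\<forall>y\<in>C. \<forall>e>0. \<exists>k. dist (d k) y < e"
    using dense_seq[OF False] by (elim exE conjE)
  have "range (phi d) \<subseteq> C" using phi_in[OF assms d(1)] by auto
  moreover have "C \<subseteq> range (phi d)"
  proof
    fix y assume "y \<in> C"
    then obtain z where "phi d z = y" using phi_surj[OF d(2)] by blast
    then show "y \<in> range (phi d)" by (metis rangeI)
  qed
  ultimately have "range (phi d) = C" by (rule subset_antisym)
  then show ?thesis unfolding ana_def using phi_cont[of d] by (intro disjI2 exI[of _ "phi d"] conjI)
qed (simp add: ana_def)

lemma ana_image:
  fixes A :: "'a::topological_space set" and g :: "'a \<Rightarrow> 'b::topological_space"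
  assumes "ana A" "continuous_on UNIV g" shows "ana (g ` A)"
proof (cases "A = {}")
  case True then show ?thesis by (simp add: ana_def)
next
  case False
  then obtain f :: "(nat\<Rightarrow>nat) \<Rightarrow> 'a" where f: "continuous_on UNIV f" "range f = A"
    using assms(1) unfolding ana_def by blast
  have "continuous_on UNIV (g \<circ> f)"
    by (rule continuous_on_compose[OF f(1) continuous_on_subset[OF assms(2)]]) simp
  moreover have "range (g \<circ> f) = g ` A" unfolding f(2)[symmetric] by (simp only: image_comp)
  ultimately show ?thesis unfolding ana_def by blast
qed

lemma shift_cont: "continuous_on UNIV (\<lambda>w::nat\<Rightarrow>'a::topological_space. \<lambda>i. w (Suc i))"
  by (intro continuous_on_coordinatewise_then_product continuous_on_product_coordinates)

lemma ana_UN: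
  fixes A :: "nat \<Rightarrow> 'a::topological_space set"
  assumes "\<And>n. ana (A n)" shows "ana (\<Union>n. A n)"
proof (cases "\<forall>n. A n = {}")
  case True then show ?thesis by (simp add: ana_def)
next
  case False
  define I where "I = {n. A n \<noteq> {}}"
  have "I \<noteq> {}" using False by (simp add: I_def)
  have "\<forall>n\<in>I. \<exists>f::(nat\<Rightarrow>nat)\<Rightarrow>'a. continuous_on UNIV f \<and> range f = A n"
  proof
    fix n assume "n \<in> I"
    then have "A n \<noteq> {}" by (simp add: I_def)
    with assms[of n] show "\<exists>f::(nat\<Rightarrow>nat)\<Rightarrow>'a. continuous_on UNIV f \<and> range f = A n"
      unfolding ana_def by blast
  qed
  from bchoice[OF this] obtain f :: "nat \<Rightarrow> (nat\<Rightarrow>nat) \<Rightarrow> 'a"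
    where f0: "\<forall>n\<in>I. continuous_on UNIV (f n) \<and> range (f n) = A n"
    by blast
  then have f: "\<And>n. n \<in> I \<Longrightarrow> continuous_on UNIV (f n) \<and> range (f n) = A n" by blast
  define h where "h = from_nat_into I"
  have hI: "h k \<in> I" for k using \<open>I \<noteq> {}\<close> by (simp add: h_def from_nat_into)
  define F where "F = (\<lambda>w. f (h (w 0)) (\<lambda>i. w (Suc i)))"
  have "continuous_on (\<Union>(range (\<lambda>k. {w::nat\<Rightarrow>nat. w 0 = k}))) F"
  proof (rule continuous_on_open_Union)
    fix s assume "s \<in> range (\<lambda>k. {w::nat\<Rightarrow>nat. w 0 = k})"
    then obtain k where k: "s = {w. w 0 = k}" by blast
    have "{w::nat\<Rightarrow>nat. w 0 = k} = (\<lambda>w. w 0) -` {k}" by auto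
    then show "open s" unfolding k
      by (simp only:) (intro open_vimage continuous_on_product_coordinates, simp add: open_discrete)
    have "continuous_on UNIV (\<lambda>w::nat\<Rightarrow>nat. f (h k) (\<lambda>i. w (Suc i)))"
      using continuous_on_compose2[OF conjunct1[OF f[OF hI[of k]]] shift_cont] by simp
    then have "continuous_on s (\<lambda>w::nat\<Rightarrow>nat. f (h k) (\<lambda>i. w (Suc i)))"
      by (rule continuous_on_subset) simp
    moreover have "\<And>w. w \<in> s \<Longrightarrow> f (h k) (\<lambda>i. w (Suc i)) = F w" by (simp add: F_def k)
    ultimately show "continuous_on s F" by (rule continuous_on_eq)
  qed
  moreover have "(\<Union>(range (\<lambda>k. {w::nat\<Rightarrow>nat. w 0 = k}))) = UNIV" by auto
  ultimately have cF: "continuous_on UNIV F" by simp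
  have "range F = (\<Union>n. A n)"
  proof
    show "range F \<subseteq> (\<Union>n. A n)"
    proof clarify
      fix w
      have "F w \<in> range (f (h (w 0)))" by (simp add: F_def)
      then have "F w \<in> A (h (w 0))" using f[OF hI] by blast
      then show "F w \<in> (\<Union>n. A n)" by blast
    qed
    show "(\<Union>n. A n) \<subseteq> range F"
    proof
      fix a assume "a \<in> (\<Union>n. A n)"
      then obtain n where n: "a \<in> A n" by blast
      then have "n \<in> I" by (auto simp: I_def)
      then obtain k where k: "h k = n" unfolding h_def using from_nat_into_surj[OF countableI_type \<open>n \<in> I\<close>] by blast
      from n f[OF \<open>n \<in> I\<close>] obtain v where v: "a = f n v" by auto
      have "F (case_nat k v) = a" by (simp add: F_def k v)
      then show "a \<in> range F" by (metis rangeI)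
    qed
  qed
  then show ?thesis unfolding ana_def using cF by blast
qed

lemma ana_INT:
  fixes A :: "nat \<Rightarrow> 'a::t2_space set"
  assumes "\<And>n. ana (A n)" shows "ana (\<Inter>n. A n)"
proof (cases "(\<Inter>n. A n) = {}")
  case True then show ?thesis by (simp add: ana_def)
next
  case False
  then obtain a where a: "\<And>n. a \<in> A n" by blast
  have "\<forall>n. \<exists>f::(nat\<Rightarrow>nat)\<Rightarrow>'a. continuous_on UNIV f \<and> range f = A n"
    using assms a by (auto simp: ana_def)
  from choice[OF this] obtain f :: "nat \<Rightarrow> (nat\<Rightarrow>nat) \<Rightarrow> 'a" where f0: "\<forall>n. continuous_on UNIV (f n) \<and> range (f n) = A n"
    by blast
  then have f: "\<And>n. continuous_on UNIV (f n)" "\<And>n. range (f n) = A n" by auto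
  have fc: "continuous_on UNIV (\<lambda>w::nat\<Rightarrow>nat\<Rightarrow>nat. f n (w n))" for n
    using continuous_on_compose2[OF f(1)[of n] continuous_on_product_coordinates[of n]] by simp
  define C where "C = (\<Inter>n. {w::nat\<Rightarrow>nat\<Rightarrow>nat. f n (w n) = f 0 (w 0)})"
  have "closed C" unfolding C_def
    by (intro closed_INT ballI closed_Collect_eq fc)
  then have "ana C" using ana_closed[of C] by simp
  have "\<forall>n. \<exists>v. f n v = a"
  proof
    fix n have "a \<in> range (f n)" using a f(2) by simp
    then show "\<exists>v. f n v = a" by blast
  qed
  from choice[OF this] obtain w where w: "\<And>n. f n (w n) = a" by blast
  then have "w \<in> C" by (simp add: C_def)
  then obtain g :: "(nat\<Rightarrow>nat) \<Rightarrow> (nat\<Rightarrow>nat\<Rightarrow>nat)" where g: "continuous_on UNIV g" "range g = C"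
    using \<open>ana C\<close> by (auto simp: ana_def)
  define F where "F = (\<lambda>z. f 0 (g z 0))"
  have cF: "continuous_on UNIV F"
    unfolding F_def using continuous_on_compose2[OF fc[of 0] g(1)] by simp
  have "range F = (\<Inter>n. A n)"
  proof
    show "range F \<subseteq> (\<Inter>n. A n)"
    proof clarify
      fix z n
      have "g z \<in> C" using g(2) by blast
      then have "g z \<in> {w. f n (w n) = f 0 (w 0)}" unfolding C_def by blast
      then have "f n (g z n) = f 0 (g z 0)" by simp
      then have "F z = f n (g z n)" by (simp add: F_def)
      then show "F z \<in> A n" using f(2) by auto
    qed
    show "(\<Inter>n. A n) \<subseteq> range F"
    proof
      fix b assume b: "b \<in> (\<Inter>n. A n)"
      have "\<forall>n. \<exists>v. f n v = b"
      proof
        fix n have "b \<in> range (f n)" using b f(2) by simp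
        then show "\<exists>v. f n v = b" by blast
      qed
      from choice[OF this] obtain u where u: "\<And>n. f n (u n) = b" by blast
      then have "u \<in> C" by (simp add: C_def)
      then obtain z where "g z = u" using g(2) by auto
      then have "F z = b" using u by (simp add: F_def)
      then show "b \<in> range F" by (metis rangeI)
    qed
  qed
  then show ?thesis using cF by (auto simp: ana_def)
qed

lemma ana_open:
  fixes U :: "'a::polish_space set"
  assumes "open U" shows "ana U"
proof (cases "U = UNIV")
  case True then show ?thesis using ana_closed[of UNIV] by simp
next
  case False
  define G where "G = (\<lambda>n::nat. {y. 1/Suc n \<le> infdist y (-U)})"
  have "closed (G n)" for n unfolding G_def
    by (intro closed_Collect_le continuous_on_const continuous_on_infdist continuous_on_id)
  then have aG: "ana (G n)" for n by (rule ana_closed)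
  have "U = (\<Union>n. G n)"
  proof
    show "U \<subseteq> (\<Union>n. G n)"
    proof
      fix y assume "y \<in> U"
      have "closed (-U)" "-U \<noteq> {}" "y \<notin> -U" using assms False \<open>y \<in> U\<close> by auto
      then have "0 < infdist y (-U)" by (rule infdist_pos_not_in_closed)
      then obtain n where "inverse (real (Suc n)) < infdist y (-U)" using reals_Archimedean by blast
      then have "y \<in> G n" by (simp add: G_def inverse_eq_divide)
      then show "y \<in> (\<Union>n. G n)" by blast
    qed
    show "(\<Union>n. G n) \<subseteq> U"
    proof
      fix y assume "y \<in> (\<Union>n. G n)"
      then obtain n where n: "1/Suc n \<le> infdist y (-U)" by (auto simp: G_def)
      show "y \<in> U"
      proof (rule ccontr)
        assume "y \<notin> U"
        then have "infdist y (-U) = 0" by (simp add: infdist_zero)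
        then show False using n by simp
      qed
    qed
  qed
  then show ?thesis using ana_UN[OF aG] by simp
qed

lemma ana_borel:
  fixes S :: "'a::polish_space set"
  assumes "S \<in> sets borel" shows "ana S"
proof -
  have "S \<in> sigma_sets UNIV {S. open S}" using assms by (simp add: sets_borel)
  then have "ana S \<and> ana (-S)"
  proof (induction rule: sigma_sets.induct)
    case (Basic a)
    then have "open a" by simp
    then show ?case using ana_open[OF \<open>open a\<close>] ana_closed[OF closed_Compl[OF \<open>open a\<close>]] by simp
  next
    case Empty
    then show ?case using ana_closed[of UNIV] by (simp add: ana_def)
  next
    case (Compl a)
    have "UNIV - a = -a" by auto
    then show ?case using Compl.IH by simp
  next
    case (Union a)
    have "-(\<Union>(range a)) = (\<Inter>i. -a i)" by auto
    have h1: "ana (\<Union>(range a))" by (rule ana_UN) (use Union.IH in blast)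
    have h2: "ana (\<Inter>i. -a i)" by (rule ana_INT) (use Union.IH in blast)
    show ?case using h1 h2 \<open>-(\<Union>(range a)) = (\<Inter>i. -a i)\<close> by simp
  qed
  then show ?thesis by simp
qed


section \<open>Cantor cube facts\<close>

lemma cantor_gens_UNIV:
  "\<Union>({{A. a \<in> A} | a. True} \<union> {{A. a \<notin> A} | a. True}) = (UNIV :: 'a set set)"
proof -
  have "A \<in> \<Union>({{A. a \<in> A} | a. True} \<union> {{A. a \<notin> A} | a. True})" for A :: "'a set"
  proof (cases "undefined \<in> A")
    case True
    then show ?thesis by blast
  next
    case False
    then show ?thesis by blast
  qed
  then show ?thesis by blast
qed

lemma cantor_topspace: "topspace cantor_top = UNIV"
  unfolding cantor_top_def topology_generated_by_topspace by (rule cantor_gens_UNIV)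

lemma cantor_open1: "openin cantor_top {A. a \<in> A}"
  unfolding cantor_top_def by (rule topology_generated_by_Basis) blast

lemma cantor_open2: "openin cantor_top {A. a \<notin> A}"
  unfolding cantor_top_def by (rule topology_generated_by_Basis) blast

lemma infsets_topspace: "topspace infsets_top = {A. infinite A}"
  by (simp add: infsets_top_def cantor_topspace)

lemma cont_borel:
  assumes "continuous_map X Y g" shows "g \<in> borel_on X \<rightarrow>\<^sub>M borel_on Y"
  unfolding borel_on_def
proof (rule measurable_measure_of)
  show "{U. openin Y U} \<subseteq> Pow (topspace Y)" using openin_subset by blast
  show "g \<in> space (sigma (topspace X) {U. openin X U}) \<rightarrow> topspace Y"
    using continuous_map_funspace[OF assms] by (simp add: space_measure_of_conv)
  fix U assume "U \<in> {U. openin Y U}"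
  then have "openin X {x \<in> topspace X. g x \<in> U}"
    using openin_continuous_map_preimage[OF assms] by blast
  moreover have "g -` U \<inter> space (sigma (topspace X) {U. openin X U}) = {x \<in> topspace X. g x \<in> U}"
    by (auto simp: space_measure_of_conv)
  moreover have "sets (sigma (topspace X) {U. openin X U}) = sigma_sets (topspace X) {U. openin X U}"
    using openin_subset by (intro sets_measure_of) blast
  ultimately show "g -` U \<inter> space (sigma (topspace X) {U. openin X U}) \<in> sets (sigma (topspace X) {U. openin X U})"
    by (simp add: sigma_sets.Basic)
qed

lemma borel_on_euclidean: "borel_on euclidean = borel"
  by (simp add: borel_on_def borel_def)

lemma openin_borel_on:
  assumes "openin X U" shows "U \<in> sets (borel_on X)"
proof -
  have "sets (borel_on X) = sigma_sets (topspace X) {U. openin X U}"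
    unfolding borel_on_def using openin_subset by (intro sets_measure_of) blast
  then show ?thesis using assms by (simp add: sigma_sets.Basic)
qed

lemma space_borel_on: "space (borel_on X) = topspace X"
  by (simp add: borel_on_def space_measure_of_conv)

lemma subset_set_borel:
  fixes V :: "'p set"
  shows "{A. infinite A \<and> A \<subseteq> V} \<in> sets (borel_on (infsets_top :: 'p set topology))"
proof -
  define W where "W = {A::'p set. infinite A} \<inter> (\<Union>a\<in>-V. {A. a \<in> A})"
  have "openin cantor_top (\<Union>a\<in>-V. {A::'p set. a \<in> A})"
    by (rule openin_Union) (auto intro: cantor_open1)
  then have "openin infsets_top W"
    unfolding W_def infsets_top_def by (rule openin_subtopology_Int2)
  then have "W \<in> sets (borel_on infsets_top)" by (rule openin_borel_on)
  then have "space (borel_on infsets_top) - W \<in> sets (borel_on infsets_top)" by (rule sets.compl_sets)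
  moreover have "space (borel_on infsets_top) - W = {A. infinite A \<and> A \<subseteq> V}"
    by (auto simp: space_borel_on infsets_topspace W_def)
  ultimately show ?thesis by simp
qed

lemma minus_cont:
  fixes f :: "(nat \<Rightarrow> nat) \<Rightarrow> 'o set"
  assumes "continuous_map euclidean cantor_top f"
  shows "continuous_map euclidean cantor_top (\<lambda>z. f z - K)"
  unfolding cantor_top_def
proof (rule continuous_on_generated_topo)
  have op: "openin euclidean {z. f z \<in> U}" if "openin cantor_top U" for U
    using openin_continuous_map_preimage[OF assms that] by simp
  fix U :: "'o set set" assume "U \<in> {{A. a \<in> A} | a. True} \<union> {{A. a \<notin> A} | a. True}"
  then obtain a where "U = {A. a \<in> A} \<or> U = {A. a \<notin> A}" by blast
  then show "openin euclidean ((\<lambda>z. f z - K) -` U \<inter> topspace euclidean)"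
  proof
    assume U: "U = {A. a \<in> A}"
    show ?thesis
    proof (cases "a \<in> K")
      case True
      then have "(\<lambda>z. f z - K) -` U \<inter> topspace euclidean = {}" by (auto simp: U)
      then show ?thesis by simp
    next
      case False
      then have "(\<lambda>z. f z - K) -` U \<inter> topspace euclidean = {z. f z \<in> {A. a \<in> A}}" by (auto simp: U)
      then show ?thesis using op[OF cantor_open1] by simp
    qed
  next
    assume U: "U = {A. a \<notin> A}"
    show ?thesis
    proof (cases "a \<in> K")
      case True
      then have "(\<lambda>z. f z - K) -` U \<inter> topspace euclidean = UNIV" by (auto simp: U)
      then show ?thesis by simp
    next
      case False
      then have "(\<lambda>z. f z - K) -` U \<inter> topspace euclidean = {z. f z \<in> {A. a \<notin> A}}" by (auto simp: U)
      then show ?thesis using op[OF cantor_open2] by simp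
    qed
  qed
next
  show "(\<lambda>z. f z - K) ` topspace euclidean \<subseteq> \<Union>({{A::'o set. a \<in> A} | a. True} \<union> {{A. a \<notin> A} | a. True})"
    using cantor_gens_UNIV by blast
qed

lemma main_ana:
  fixes \<F> :: "'o::countable set set"
    and \<rho> :: "'o set \<Rightarrow> 'p::countable set"
    and x :: "'p \<Rightarrow> 'x::polish_space"
  assumes F_ne: "\<F> \<noteq> {}" and F_inf: "\<forall>A\<in>\<F>. infinite A"
    and F_fin: "\<forall>A\<in>\<F>. \<forall>K. finite K \<longrightarrow> A - K \<in> \<F>"
    and rho_inf: "\<forall>F\<in>\<F>. infinite (\<rho> F)"
    and F_an: "analytic_in infsets_top \<F>"
    and rho_meas: "\<rho> \<in> borel_on (subtopology infsets_top \<F>) \<rightarrow>\<^sub>M borel_on infsets_top"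
  shows "ana (Lambda_lim \<F> \<rho> x)"
proof -
  obtain f :: "(nat\<Rightarrow>nat) \<Rightarrow> 'o set" where fc: "continuous_map euclidean infsets_top f" and rf: "range f = \<F>"
    using F_an F_ne unfolding analytic_in_def by blast
  have fc': "continuous_map euclidean cantor_top f"
    using fc unfolding infsets_top_def continuous_map_in_subtopology by blast
  have fF: "f z \<in> \<F>" for z using rf by blast
  define Bset where "Bset = (\<lambda>b K. {z. \<rho> (f z - K) \<subseteq> x -` b})"
  have Bset_borel: "Bset b K \<in> sets borel" if "finite K" for b K
  proof -
    have "continuous_map euclidean (subtopology infsets_top \<F>) (\<lambda>z. f z - K)"
      unfolding infsets_top_def subtopology_subtopology continuous_map_in_subtopology
    proof
      show "continuous_map euclidean cantor_top (\<lambda>z. f z - K)" by (rule minus_cont[OF fc'])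
      show "(\<lambda>z. f z - K) \<in> topspace euclidean \<rightarrow> {A. infinite A} \<inter> \<F>"
        using F_fin F_inf fF \<open>finite K\<close> by blast
    qed
    then have "(\<lambda>z. f z - K) \<in> borel \<rightarrow>\<^sub>M borel_on (subtopology infsets_top \<F>)"
      using cont_borel borel_on_euclidean by metis
    from measurable_comp[OF this rho_meas]
    have m: "(\<lambda>z. \<rho> (f z - K)) \<in> borel \<rightarrow>\<^sub>M borel_on infsets_top" by (simp add: o_def)
    have "(\<lambda>z. \<rho> (f z - K)) -` {A. infinite A \<and> A \<subseteq> x -` b} \<inter> space borel \<in> sets borel"
      by (rule measurable_sets[OF m subset_set_borel])
    moreover have "(\<lambda>z. \<rho> (f z - K)) -` {A. infinite A \<and> A \<subseteq> x -` b} \<inter> space borel = Bset b K"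
      using rho_inf F_fin fF \<open>finite K\<close> by (auto simp: Bset_def)
    ultimately show ?thesis by simp
  qed
  obtain Bas :: "'x set set" where Bas: "countable Bas" "topological_basis Bas"
    using ex_countable_basis by blast
  define S where "S = (\<Inter>b\<in>Bas. ((-b) \<times> UNIV \<union> (\<Union>K\<in>{K. finite K}. UNIV \<times> Bset b K)))"
  have Sb: "(-b) \<times> UNIV \<union> (\<Union>K\<in>{K. finite K}. UNIV \<times> Bset b K) \<in> sets (borel \<Otimes>\<^sub>M (borel :: (nat\<Rightarrow>nat) measure))"
    if "b \<in> Bas" for b
  proof -
    have "open b" using that Bas(2) topological_basis_open by blast
    then have "-b \<in> sets borel" by (intro borel_closed closed_Compl)
    then have "(-b) \<times> UNIV \<in> sets (borel \<Otimes>\<^sub>M (borel :: (nat\<Rightarrow>nat) measure))"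
      by (intro pair_measureI) auto
    moreover
    have "(UNIV :: 'x set) \<times> Bset b K \<in> sets (borel \<Otimes>\<^sub>M (borel :: (nat\<Rightarrow>nat) measure))"
      if "finite K" for K
      using Bset_borel[OF that] by (intro pair_measureI) auto
    then have "(\<lambda>K. (UNIV :: 'x set) \<times> Bset b K) ` {K. finite K} \<subseteq> sets (borel \<Otimes>\<^sub>M (borel :: (nat\<Rightarrow>nat) measure))"
      by blast
    then have "(\<Union>K\<in>{K. finite K}. (UNIV :: 'x set) \<times> Bset b K) \<in> sets (borel \<Otimes>\<^sub>M (borel :: (nat\<Rightarrow>nat) measure))"
      by (rule sets.countable_UN'[OF countable_Collect_finite])
    ultimately show ?thesis by (rule sets.Un)
  qed
  have top: "(UNIV :: ('x \<times> (nat\<Rightarrow>nat)) set) \<in> sets (borel \<Otimes>\<^sub>M (borel :: (nat\<Rightarrow>nat) measure))"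
    using sets.top[of "(borel :: 'x measure) \<Otimes>\<^sub>M (borel :: (nat\<Rightarrow>nat) measure)"] by (simp add: space_pair_measure)
  have "S \<in> sets (borel \<Otimes>\<^sub>M (borel :: (nat\<Rightarrow>nat) measure))"
    unfolding S_def by (rule sets.countable_INT''[OF top Bas(1) Sb])
  then have "S \<in> sets (borel :: ('x \<times> (nat\<Rightarrow>nat)) measure)"
    using borel_prod[where 'a='x and 'b="nat\<Rightarrow>nat"] by (simp only:)
  then have "ana S" by (rule ana_borel)
  then have "ana (fst ` S)"
    by (rule ana_image) (intro continuous_on_fst continuous_on_id)
  moreover have "fst ` S = Lambda_lim \<F> \<rho> x"
  proof
    show "fst ` S \<subseteq> Lambda_lim \<F> \<rho> x"
    proof
      fix \<eta> assume "\<eta> \<in> fst ` S"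
      then obtain z where z: "(\<eta>, z) \<in> S" by force
      have "\<exists>K. finite K \<and> (\<forall>s\<in>\<rho> (f z - K). x s \<in> U)" if U: "open U" "\<eta> \<in> U" for U
      proof -
        obtain b where b: "b \<in> Bas" "\<eta> \<in> b" "b \<subseteq> U"
          using topological_basisE[OF Bas(2) U] by blast
        then have "(\<eta>, z) \<in> (-b) \<times> UNIV \<union> (\<Union>K\<in>{K. finite K}. UNIV \<times> Bset b K)"
          using z unfolding S_def by blast
        then obtain K where "finite K" "z \<in> Bset b K" using b(2) by blast
        then show ?thesis using b(3) by (auto simp: Bset_def)
      qed
      then show "\<eta> \<in> Lambda_lim \<F> \<rho> x"
        unfolding Lambda_lim_def using fF by blast
    qed
    show "Lambda_lim \<F> \<rho> x \<subseteq> fst ` S"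
    proof
      fix \<eta> assume "\<eta> \<in> Lambda_lim \<F> \<rho> x"
      then obtain F where F: "F \<in> \<F>" "\<forall>U. open U \<and> \<eta> \<in> U \<longrightarrow> (\<exists>K. finite K \<and> (\<forall>s\<in>\<rho> (F - K). x s \<in> U))"
        unfolding Lambda_lim_def by blast
      obtain z where z: "f z = F" using F(1) rf by blast
      have "(\<eta>, z) \<in> S"
        unfolding S_def
      proof (intro INT_I)
        fix b assume "b \<in> Bas"
        then have "open b" using Bas(2) topological_basis_open by blast
        show "(\<eta>, z) \<in> (-b) \<times> UNIV \<union> (\<Union>K\<in>{K. finite K}. UNIV \<times> Bset b K)"
        proof (cases "\<eta> \<in> b")
          case True
          then obtain K where "finite K" "\<forall>s\<in>\<rho> (F - K). x s \<in> b" using F(2) \<open>open b\<close> by blast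
          then have "z \<in> Bset b K" using z by (auto simp: Bset_def)
          then show ?thesis using \<open>finite K\<close> by blast
        qed simp
      qed
      then show "\<eta> \<in> fst ` S" by force
    qed
  qed
  ultimately show ?thesis by simp
qed

theorem proposition4p1:
  fixes \<F> :: "'o::countable set set"
    and \<rho> :: "'o set \<Rightarrow> 'p::countable set"
  assumes "infinite (UNIV :: 'o set)" and "infinite (UNIV :: 'p set)"
    and "\<F> \<noteq> {}" and "\<forall>A\<in>\<F>. infinite A"
    and "\<forall>A\<in>\<F>. \<forall>K. finite K \<longrightarrow> A - K \<in> \<F>"
    and "\<forall>F\<in>\<F>. infinite (\<rho> F)"
    and "partition_regular \<F> \<rho>"
    and "analytic_in infsets_top \<F>"
    and "\<rho> \<in> borel_on (subtopology infsets_top \<F>) \<rightarrow>\<^sub>M borel_on infsets_top"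
  shows "\<forall>A \<in> (L_fam \<F> \<rho> :: 'x::polish_space set set). analytic_in euclidean A"
proof
  fix A :: "'x set" assume "A \<in> L_fam \<F> \<rho>"
  then have "A = {} \<or> (\<exists>x :: 'p \<Rightarrow> 'x. A = Lambda_lim \<F> \<rho> x)" unfolding L_fam_def by blast
  then have "ana A"
  proof
    assume "A = {}" then show "ana A" by (simp add: ana_def)
  next
    assume "\<exists>x :: 'p \<Rightarrow> 'x. A = Lambda_lim \<F> \<rho> x"
    then obtain x :: "'p \<Rightarrow> 'x" where "A = Lambda_lim \<F> \<rho> x" by blast
    then show "ana A" using main_ana[OF assms(3,4,5,6,8,9), of x] by simp
  qed
  then show "analytic_in euclidean A"
    unfolding analytic_in_def ana_def continuous_map_iff_continuous2 by simp
qed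

end
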